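(* Let $x$ be an indeterminate, let $l,m,n$ be positive integers with $l > m\geq n\geq \frac{l}{2}$, and let $c_1,c_2\in\mathbb{Q}$ be constants. For $0\le k\le m$ and $r\in\{1,2\}$ write $$U_k^{(r)}:=c_1\bigl(H_{k+n}^{(r)} - H_{k+l-n-1}^{(r)}\bigr) + c_2 \bigl(H_{k+m}^{(r)} - H_{k+l-m-1}^{(r)}\bigr).$$ Then, as an identity of rational functions in $x$ over $\mathbb{Q}$, \begin{multline*} \sum_{k=0}^{n} \frac{1}{x+k} \binom{m+k}{k} \binom{m}{k} \binom{n+k}{k} \binom{n}{k} \Biggl\{ U_k^{(1)} \cdot \Bigl[ \frac{x}{x+k} + k \bigl(H_{m+k}^{(1)} +H_{m-k}^{(1)} + H_{n+k}^{(1)} + H_{n-k}^{(1)} -4H_k^{(1)}\bigr) \Bigr] - k\, U_k^{(2)}\Biggr\} \\ +\sum_{k=n+1}^{m} \frac{(-1)^{k-n}}{x+k} \binom{m+k}{k} \binom{m}{k} \binom{n+k}{k} \Big/ \binom{k-1}{n}\; U_k^{(1)}\\ =\frac{x\, (1-x)_{n}\, (1-x)_{m}}{(x)_{n+1}\, (x)_{m+1}} \left[c_1 \sum_{s=l-n}^{n} \frac{1}{s-x} + c_2 \sum_{s=l-m}^{m} \frac{1}{s-x} \right]. \end{multline*}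
   Context: For non-negative integers $i$ and $n$, the generalized harmonic sum is $H^{(i)}_{n}:=\sum_{j=1}^{n} j^{-i}$ for $n\ge 1$, and $H^{(i)}_{0}:=0$. For $a$ and a non-negative integer $n$, $(a)_n$ denotes the rising factorial: $(a)_0:=1$ and $(a)_n:=a(a+1)\cdots(a+n-1)$ for $n>0$. An empty sum equals $0$. *)

theory Defs
  imports Complex_Main "HOL-Computational_Algebra.Polynomial" "HOL-Computational_Algebra.Fraction_Field"
begin

definition harm :: "nat \<Rightarrow> nat \<Rightarrow> rat" where
  "harm i n = (\<Sum>j=1..n. 1 / (of_nat j) ^ i)"

type_synonym ratfun = "rat poly fract"

definition RX :: ratfun where
  "RX = Fract [:0, 1:] 1"

definition RC :: "rat \<Rightarrow> ratfun" where
  "RC c = Fract [:c:] 1"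

end

theory Submission
  imports Defs
begin


definition tf :: "rat poly \<Rightarrow> ratfun" where "tf p = Fract p 1"

lemma tf_add: "tf (p + q) = tf p + tf q" by (simp add: tf_def)
lemma tf_mult: "tf (p * q) = tf p * tf q" by (simp add: tf_def)
lemma tf_minus: "tf (- p) = - tf p" by (simp add: tf_def)
lemma tf_diff: "tf (p - q) = tf p - tf q" by (simp add: tf_def)
lemma tf_0: "tf 0 = 0" by (simp add: tf_def Zero_fract_def)
lemma tf_1: "tf 1 = 1" by (simp add: tf_def One_fract_def)
lemma tf_of_nat: "tf (of_nat k) = of_nat k" by (simp add: tf_def Fract_of_nat_eq)
lemma tf_sum: "tf (sum f A) = (\<Sum>a\<in>A. tf (f a))"
  by (induction A rule: infinite_finite_induct) (auto simp: tf_0 tf_add)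
lemma tf_prod: "tf (prod f A) = (\<Prod>a\<in>A. tf (f a))"
  by (induction A rule: infinite_finite_induct) (auto simp: tf_1 tf_mult)
lemma tf_power: "tf (p ^ k) = tf p ^ k"
  by (induction k) (auto simp: tf_1 tf_mult)
lemma tf_eq_iff: "tf p = tf q \<longleftrightarrow> p = q" by (simp add: tf_def eq_fract)
lemma tf_eq_0_iff: "tf p = 0 \<longleftrightarrow> p = 0" using tf_eq_iff[of p 0] by (simp add: tf_0)
lemma RX_tf: "RX = tf [:0,1:]" by (simp add: RX_def tf_def)
lemma RC_tf: "RC c = tf [:c:]" by (simp add: RC_def tf_def)
lemma RC_add: "RC (a + b) = RC a + RC b" by (simp add: RC_tf tf_add[symmetric])
lemma RC_mult: "RC (a * b) = RC a * RC b" by (simp add: RC_tf tf_mult[symmetric] mult.commute)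
lemma RC_diff: "RC (a - b) = RC a - RC b" by (simp add: RC_tf tf_diff[symmetric])
lemma RC_0: "RC 0 = 0" by (simp add: RC_tf tf_0[symmetric])
lemma RC_sum: "RC (sum f A) = (\<Sum>a\<in>A. RC (f a))"
  by (induction A rule: infinite_finite_induct) (auto simp: RC_add RC_0)




lemma P1: "(\<Prod>i\<in>{0..<j}. (of_nat j - of_nat i :: rat)) = fact j"
proof -
  have "(\<Prod>i\<in>{0..<j}. (of_nat j - of_nat i :: rat)) = (\<Prod>k\<in>{1..j}. of_nat k)"
    by (rule prod.reindex_bij_witness[of _ "\<lambda>k. j - k" "\<lambda>i. j - i"]) (auto simp: of_nat_diff)
  then show ?thesis by (simp add: fact_prod)
qed

lemma P2: "j \<le> b \<Longrightarrow> (\<Prod>i\<in>{j<..b}. (of_nat i - of_nat j :: rat)) = fact (b - j)"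
proof -
  assume "j \<le> b"
  have "(\<Prod>i\<in>{j<..b}. (of_nat i - of_nat j :: rat)) = (\<Prod>k\<in>{1..b-j}. of_nat k)"
    by (rule prod.reindex_bij_witness[of _ "\<lambda>k. k + j" "\<lambda>i. i - j"]) (auto simp: of_nat_diff)
  then show ?thesis by (simp add: fact_prod)
qed

lemma P3: "a < j \<Longrightarrow> (\<Prod>i\<in>{a<..<j}. (of_nat i - of_nat j :: rat)) = (-1)^(j-a-1) * fact (j - a - 1)"
proof -
  assume "a < j"
  have "(\<Prod>i\<in>{a<..<j}. (of_nat i - of_nat j :: rat)) = (\<Prod>i\<in>{a<..<j}. (-1) * (of_nat j - of_nat i :: rat))"
    by simp
  also have "\<dots> = (\<Prod>i\<in>{a<..<j}. (-1::rat)) * (\<Prod>i\<in>{a<..<j}. (of_nat j - of_nat i :: rat))"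
    by (rule prod.distrib)
  also have "(\<Prod>i\<in>{a<..<j}. (-1::rat)) = (-1)^(j-a-1)" by simp
  also have "(\<Prod>i\<in>{a<..<j}. (of_nat j - of_nat i :: rat)) = (\<Prod>k\<in>{1..j-a-1}. of_nat k)"
    by (rule prod.reindex_bij_witness[of _ "\<lambda>k. j - k" "\<lambda>i. j - i"]) (auto simp: of_nat_diff)
  finally show ?thesis by (simp add: fact_prod)
qed

lemma P4aux: "(\<Prod>i\<in>{0..a}. (of_nat (a + 1 + d) - of_nat i :: rat)) * fact d = fact (a + 1 + d)"
proof (induction a arbitrary: d)
  case 0 then show ?case by (simp add: algebra_simps)
next
  case (Suc a)
  have "(\<Prod>i\<in>{0..Suc a}. (of_nat (Suc a + 1 + d) - of_nat i :: rat)) * fact d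
      = (\<Prod>i\<in>{0..a}. (of_nat (a + 1 + Suc d) - of_nat i :: rat)) * (of_nat (Suc d) * fact d)"
    by (simp add: prod.atLeast0_atMost_Suc algebra_simps)
  also have "\<dots> = fact (a + 1 + Suc d)" using Suc[of "Suc d"] by simp
  finally show ?case by simp
qed

lemma P4: "a < j \<Longrightarrow> (\<Prod>i\<in>{0..a}. (of_nat j - of_nat i :: rat)) = fact j / fact (j - a - 1)"
  using P4aux[of a "j - a - 1"] by (simp add: field_simps)

lemma P5: "(\<Prod>i\<in>{1..n}. (of_nat i + of_nat j :: rat)) = fact (n + j) / fact j"
proof (induction n)
  case 0 then show ?case by simp
next
  case (Suc n)
  have "(\<Prod>i\<in>{1..Suc n}. (of_nat i + of_nat j :: rat)) = (\<Prod>i\<in>{1..n}. (of_nat i + of_nat j :: rat)) * (of_nat (Suc n) + of_nat j)"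
    by (simp add: atLeastAtMostSuc_conv mult.commute)
  moreover have "fact (Suc n + j) = (of_nat (Suc n) + of_nat j) * (fact (n + j) :: rat)"
    by (simp add: algebra_simps)
  ultimately show ?case using Suc by simp
qed

lemma S1: "(\<Sum>i\<in>{0..<j}. 1 / (of_nat i - of_nat j :: rat)) = - harm 1 j"
proof -
  have "(\<Sum>i\<in>{0..<j}. 1 / (of_nat i - of_nat j :: rat)) = (\<Sum>k\<in>{1..j}. - (1 / of_nat k))"
    by (rule sum.reindex_bij_witness[of _ "\<lambda>k. j - k" "\<lambda>i. j - i"]) (auto simp: of_nat_diff divide_simps)
  then show ?thesis by (simp add: harm_def sum_negf)
qed

lemma S2: "j \<le> b \<Longrightarrow> (\<Sum>i\<in>{j<..b}. 1 / (of_nat i - of_nat j :: rat)) = harm 1 (b - j)"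
proof -
  assume "j \<le> b"
  have "(\<Sum>i\<in>{j<..b}. 1 / (of_nat i - of_nat j :: rat)) = (\<Sum>k\<in>{1..b-j}. 1 / of_nat k)"
    by (rule sum.reindex_bij_witness[of _ "\<lambda>k. k + j" "\<lambda>i. i - j"]) (auto simp: of_nat_diff)
  then show ?thesis by (simp add: harm_def)
qed

lemma S3: "(\<Sum>i\<in>{1..n}. 1 / (of_nat i + of_nat j :: rat)) = harm 1 (n + j) - harm 1 j"
proof (induction n)
  case 0 then show ?case by simp
next
  case (Suc n)
  have "harm 1 (Suc n + j) = harm 1 (n + j) + 1 / (of_nat (Suc n) + of_nat j)"
    by (simp add: harm_def atLeastAtMostSuc_conv add.commute)
  then show ?case using Suc by (simp add: atLeastAtMostSuc_conv)
qed

lemma harm_diff: "a \<le> b \<Longrightarrow> harm r (k + b) - harm r (k + a) = (\<Sum>s\<in>{a<..b}. 1 / of_nat (k + s) ^ r)"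
proof (induction b rule: dec_induct)
  case base then show ?case by simp
next
  case (step b)
  have "harm r (k + Suc b) = harm r (k + b) + 1 / of_nat (k + Suc b) ^ r"
    by (simp add: harm_def atLeastAtMostSuc_conv add.commute)
  moreover have "{a<..Suc b} = insert (Suc b) {a<..b}" using step by auto
  ultimately show ?case using step by (simp add: algebra_simps)
qed




definition lin :: "nat \<Rightarrow> rat poly" where "lin i = [:of_nat i, 1:]"
definition ee :: "nat \<Rightarrow> nat \<Rightarrow> nat" where "ee n i = (if i \<le> n then 2 else 1)"
definition Dk :: "nat \<Rightarrow> nat \<Rightarrow> nat \<Rightarrow> rat poly" where
  "Dk m n k = (\<Prod>i\<in>{0..m}-{k}. lin i ^ ee n i)"
definition Dful :: "nat \<Rightarrow> nat \<Rightarrow> rat poly" where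
  "Dful m n = (\<Prod>i\<in>{0..m}. lin i ^ ee n i)"

lemma poly_lin[simp]: "poly (lin i) x = x + of_nat i" by (simp add: lin_def)
lemma lin_nz[simp]: "lin i \<noteq> 0" by (simp add: lin_def)
lemma degree_lin[simp]: "degree (lin i) = 1" by (simp add: lin_def)
lemma pderiv_lin[simp]: "pderiv (lin i) = 1" by (simp add: lin_def pderiv_pCons)
lemma ee_pos[simp]: "0 < ee n i" by (simp add: ee_def)

lemma pderiv_prod_at:
  fixes f :: "'b \<Rightarrow> rat poly"
  assumes "finite S" "\<And>i. i \<in> S \<Longrightarrow> poly (f i) x \<noteq> 0"
  shows "poly (pderiv (prod f S)) x = poly (prod f S) x * (\<Sum>i\<in>S. poly (pderiv (f i)) x / poly (f i) x)"
  using assms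
proof (induction S rule: finite_induct)
  case empty then show ?case by simp
next
  case (insert a S)
  have "poly (f a) x \<noteq> 0" using insert by auto
  with insert show ?case by (simp add: pderiv_mult poly_prod field_simps sum_distrib_left)
qed

lemma lin_pow_ratio:
  assumes "0 < e" "x + of_nat i \<noteq> 0"
  shows "poly (pderiv (lin i ^ e)) x / poly (lin i ^ e) x = of_nat e / (x + of_nat i)"
proof -
  obtain k where e: "e = Suc k" using assms by (cases e) auto
  have "poly (pderiv (lin i ^ Suc k)) x = of_nat (Suc k) * (x + of_nat i) ^ k"
    by (simp only: pderiv_power_Suc) (simp add: poly_power)
  moreover have "poly (lin i ^ Suc k) x = (x + of_nat i) ^ k * (x + of_nat i)" by (simp add: poly_power)
  moreover have "(x + of_nat i) ^ k \<noteq> 0" using assms(2) by simp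
  ultimately show ?thesis using assms(2) unfolding e by (simp del: of_nat_Suc power_Suc)
qed

lemma Dful_split: "j \<le> m \<Longrightarrow> Dful m n = lin j ^ ee n j * Dk m n j"
  unfolding Dful_def Dk_def by (rule prod.remove) auto

lemma lin_dvd_Dk: "j \<le> m \<Longrightarrow> k \<noteq> j \<Longrightarrow> lin j ^ ee n j dvd Dk m n k"
  unfolding Dk_def by (rule dvd_prodI) auto

lemma Dk_val: "poly (Dk m n j) (- of_nat j) = (\<Prod>i\<in>{0..m}-{j}. (of_nat i - of_nat j) ^ ee n i)"
  unfolding Dk_def by (simp add: poly_prod)

lemma Dk_der: "poly (pderiv (Dk m n j)) (- of_nat j) =
   poly (Dk m n j) (- of_nat j) * (\<Sum>i\<in>{0..m}-{j}. of_nat (ee n i) / (of_nat i - of_nat j))"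
proof -
  have "poly (pderiv (Dk m n j)) (- of_nat j) = poly (Dk m n j) (- of_nat j) *
     (\<Sum>i\<in>{0..m}-{j}. poly (pderiv (lin i ^ ee n i)) (- of_nat j) / poly (lin i ^ ee n i) (- of_nat j))"
    unfolding Dk_def by (rule pderiv_prod_at) auto
  also have "(\<Sum>i\<in>{0..m}-{j}. poly (pderiv (lin i ^ ee n i)) (- of_nat j) / poly (lin i ^ ee n i) (- of_nat j))
      = (\<Sum>i\<in>{0..m}-{j}. of_nat (ee n i) / (of_nat i - of_nat j))"
  proof (rule sum.cong)
    fix i assume "i \<in> {0..m}-{j}"
    then have "poly (pderiv (lin i ^ ee n i)) (- of_nat j) / poly (lin i ^ ee n i) (- of_nat j)
        = of_nat (ee n i) / (- of_nat j + of_nat i)" by (intro lin_pow_ratio) auto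
    then show "poly (pderiv (lin i ^ ee n i)) (- of_nat j) / poly (lin i ^ ee n i) (- of_nat j)
        = of_nat (ee n i) / (of_nat i - of_nat j)" by simp
  qed simp
  finally show ?thesis .
qed

lemma crit1: "poly p (- of_nat a) = 0 \<Longrightarrow> lin a dvd p"
  using poly_eq_0_iff_dvd[of p "- of_nat a"] by (simp add: lin_def)

lemma crit2:
  assumes "poly p (- of_nat a) = 0" "poly (pderiv p) (- of_nat a) = 0"
  shows "lin a ^ 2 dvd p"
proof -
  obtain q where q: "p = lin a * q" using crit1[OF assms(1)] by (elim dvdE)
  have "poly (pderiv p) (- of_nat a) = poly q (- of_nat a)"
    unfolding q by (simp add: pderiv_mult)
  then have "lin a dvd q" using crit1 assms(2) by simp
  then obtain r where r: "q = lin a * r" by (elim dvdE)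
  have "p = lin a ^ 2 * r" unfolding q r power2_eq_square by (simp only: mult.assoc)
  then show ?thesis by (simp only: dvd_triv_left)
qed

lemma lin_alt: "lin j = [:- (- of_nat j), 1:]" by (simp add: lin_def)

lemma lin_cancel:
  assumes "j \<noteq> a" "lin j ^ k dvd lin a ^ e * q"
  shows "lin j ^ k dvd q"
proof (cases "q = 0")
  case True then show ?thesis by simp
next
  case False
  have nz: "lin a ^ e * q \<noteq> 0" using False by simp
  have "order (- of_nat j) (lin a ^ e) = 0"
    by (rule order_0I) (use assms(1) in \<open>simp add: poly_power\<close>)
  then have "order (- of_nat j) (lin a ^ e * q) = order (- of_nat j) q"
    using order_mult[OF nz] by simp
  moreover have "k \<le> order (- of_nat j) (lin a ^ e * q)"
    using assms(2) nz unfolding lin_alt order_divides by simp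
  ultimately show ?thesis using order_divides[of "- of_nat j" k q] unfolding lin_alt by simp
qed

lemma prod_dvd_lin:
  assumes "finite A" "\<And>j. j \<in> A \<Longrightarrow> lin j ^ f j dvd q"
  shows "(\<Prod>j\<in>A. lin j ^ f j) dvd q"
  using assms
proof (induction A arbitrary: q rule: finite_induct)
  case empty then show ?case by simp
next
  case (insert a A)
  obtain q1 where q1: "q = lin a ^ f a * q1" using insert.prems[of a] by (auto elim: dvdE)
  have "(\<Prod>j\<in>A. lin j ^ f j) dvd q1"
  proof (rule insert.IH)
    fix j assume "j \<in> A"
    then have "j \<noteq> a" using insert.hyps by auto
    have "lin j ^ f j dvd lin a ^ f a * q1" using insert.prems[of j] \<open>j \<in> A\<close> unfolding q1 by simp
    then show "lin j ^ f j dvd q1" by (rule lin_cancel[OF \<open>j \<noteq> a\<close>])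
  qed
  then have "lin a ^ f a * (\<Prod>j\<in>A. lin j ^ f j) dvd lin a ^ f a * q1" by (rule mult_dvd_mono[OF dvd_refl])
  then show ?case unfolding q1 by (simp only: prod.insert[OF insert.hyps])
qed

lemma Dful_dvd: "(\<And>j. j \<le> m \<Longrightarrow> lin j ^ ee n j dvd q) \<Longrightarrow> Dful m n dvd q"
  unfolding Dful_def by (rule prod_dvd_lin) auto

lemma degree_Dful: "degree (Dful m n) = (\<Sum>i\<in>{0..m}. ee n i)"
  unfolding Dful_def by (subst degree_prod_sum_eq) (auto simp: degree_power_eq)

lemma degree_Dk: "degree (Dk m n k) = (\<Sum>i\<in>{0..m}-{k}. ee n i)"
  unfolding Dk_def by (subst degree_prod_sum_eq) (auto simp: degree_power_eq)




lemma prod_un3: "finite A \<Longrightarrow> finite B \<Longrightarrow> finite C \<Longrightarrow> A \<inter> B = {} \<Longrightarrow> A \<inter> C = {} \<Longrightarrow> B \<inter> C = {} \<Longrightarrow>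
   prod f (A \<union> (B \<union> C)) = prod f A * (prod f B * prod f C)"
  by (simp add: prod.union_disjoint Int_Un_distrib)
lemma sum_un3: "finite A \<Longrightarrow> finite B \<Longrightarrow> finite C \<Longrightarrow> A \<inter> B = {} \<Longrightarrow> A \<inter> C = {} \<Longrightarrow> B \<inter> C = {} \<Longrightarrow>
   sum f (A \<union> (B \<union> C)) = sum f A + (sum f B + sum f C)"
  by (simp add: sum.union_disjoint Int_Un_distrib)
lemma prod_split2: "(j::nat) \<le> n \<Longrightarrow> n \<le> m \<Longrightarrow> prod f {j<..m} = prod f {j<..n} * prod f {n<..m}"
proof -
  assume "j \<le> n" "n \<le> m"
  then have e: "{j<..m} = {j<..n} \<union> {n<..m}" by auto
  show ?thesis unfolding e by (rule prod.union_disjoint) auto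
qed
lemma sum_split2: "(j::nat) \<le> n \<Longrightarrow> n \<le> m \<Longrightarrow> sum f {j<..m} = sum f {j<..n} + sum f {n<..m}"
proof -
  assume "j \<le> n" "n \<le> m"
  then have e: "{j<..m} = {j<..n} \<union> {n<..m}" by auto
  show ?thesis unfolding e by (rule sum.union_disjoint) auto
qed

lemma split3: "(j::nat) \<le> n \<Longrightarrow> n \<le> m \<Longrightarrow> {0..m}-{j} = {0..<j} \<union> ({j<..n} \<union> {n<..m})" by auto

lemma Dk_val_le:
  assumes "j \<le> n" "n \<le> m"
  shows "poly (Dk m n j) (- of_nat j) = fact j ^ 2 * fact (n - j) ^ 2 * (fact (m - j) / fact (n - j))"
proof -
  have A: "(\<Prod>i\<in>{0..<j}. (of_nat i - of_nat j :: rat) ^ ee n i) = fact j ^ 2"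
  proof -
    have "(\<Prod>i\<in>{0..<j}. (of_nat i - of_nat j :: rat) ^ ee n i) = (\<Prod>i\<in>{0..<j}. (of_nat j - of_nat i :: rat) ^ 2)"
      by (rule prod.cong) (use assms in \<open>auto simp: ee_def power2_commute\<close>)
    also have "\<dots> = fact j ^ 2" by (simp add: prod_power_distrib[symmetric] P1)
    finally show ?thesis .
  qed
  have B: "(\<Prod>i\<in>{j<..n}. (of_nat i - of_nat j :: rat) ^ ee n i) = fact (n - j) ^ 2"
  proof -
    have "(\<Prod>i\<in>{j<..n}. (of_nat i - of_nat j :: rat) ^ ee n i) = (\<Prod>i\<in>{j<..n}. (of_nat i - of_nat j :: rat) ^ 2)"
      by (rule prod.cong) (use assms in \<open>auto simp: ee_def\<close>)
    also have "\<dots> = fact (n - j) ^ 2" using assms by (simp add: prod_power_distrib[symmetric] P2)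
    finally show ?thesis .
  qed
  have C: "(\<Prod>i\<in>{n<..m}. (of_nat i - of_nat j :: rat) ^ ee n i) = fact (m - j) / fact (n - j)"
  proof -
    have "(\<Prod>i\<in>{n<..m}. (of_nat i - of_nat j :: rat) ^ ee n i) = (\<Prod>i\<in>{n<..m}. (of_nat i - of_nat j :: rat))"
      by (rule prod.cong) (auto simp: ee_def)
    moreover have "(\<Prod>i\<in>{j<..m}. (of_nat i - of_nat j :: rat)) = (\<Prod>i\<in>{j<..n}. (of_nat i - of_nat j :: rat)) * (\<Prod>i\<in>{n<..m}. (of_nat i - of_nat j :: rat))"
      using assms by (rule prod_split2)
    ultimately show ?thesis using assms by (simp add: P2 field_simps)
  qed
  have "poly (Dk m n j) (- of_nat j) = (\<Prod>i\<in>{0..<j} \<union> ({j<..n} \<union> {n<..m}). (of_nat i - of_nat j) ^ ee n i)"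
    using Dk_val split3[OF assms] by simp
  also have "\<dots> = (\<Prod>i\<in>{0..<j}. (of_nat i - of_nat j) ^ ee n i) * ((\<Prod>i\<in>{j<..n}. (of_nat i - of_nat j) ^ ee n i) * (\<Prod>i\<in>{n<..m}. (of_nat i - of_nat j) ^ ee n i))"
    by (rule prod_un3) (use assms in auto)
  finally show ?thesis using A B C by simp
qed

lemma Dk_der_le:
  assumes "j \<le> n" "n \<le> m"
  shows "(\<Sum>i\<in>{0..m}-{j}. of_nat (ee n i) / (of_nat i - of_nat j) :: rat) = - 2 * harm 1 j + harm 1 (n - j) + harm 1 (m - j)"
proof -
  have A: "(\<Sum>i\<in>{0..<j}. of_nat (ee n i) / (of_nat i - of_nat j) :: rat) = - 2 * harm 1 j"
  proof -
    have "(\<Sum>i\<in>{0..<j}. of_nat (ee n i) / (of_nat i - of_nat j) :: rat) = (\<Sum>i\<in>{0..<j}. 2 * (1 / (of_nat i - of_nat j)))"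
      by (rule sum.cong) (use assms in \<open>auto simp: ee_def\<close>)
    also have "\<dots> = 2 * (\<Sum>i\<in>{0..<j}. 1 / (of_nat i - of_nat j))" by (rule sum_distrib_left[symmetric])
    also have "\<dots> = - 2 * harm 1 j" by (simp only: S1)
    finally show ?thesis .
  qed
  have B: "(\<Sum>i\<in>{j<..n}. of_nat (ee n i) / (of_nat i - of_nat j) :: rat) = 2 * harm 1 (n - j)"
  proof -
    have "(\<Sum>i\<in>{j<..n}. of_nat (ee n i) / (of_nat i - of_nat j) :: rat) = (\<Sum>i\<in>{j<..n}. 2 * (1 / (of_nat i - of_nat j)))"
      by (rule sum.cong) (use assms in \<open>auto simp: ee_def\<close>)
    also have "\<dots> = 2 * (\<Sum>i\<in>{j<..n}. 1 / (of_nat i - of_nat j))" by (rule sum_distrib_left[symmetric])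
    also have "\<dots> = 2 * harm 1 (n - j)" using assms by (simp only: S2)
    finally show ?thesis .
  qed
  have C: "(\<Sum>i\<in>{n<..m}. of_nat (ee n i) / (of_nat i - of_nat j) :: rat) = harm 1 (m - j) - harm 1 (n - j)"
  proof -
    have "(\<Sum>i\<in>{n<..m}. of_nat (ee n i) / (of_nat i - of_nat j) :: rat) = (\<Sum>i\<in>{n<..m}. 1 / (of_nat i - of_nat j))"
      by (rule sum.cong) (auto simp: ee_def)
    moreover have "(\<Sum>i\<in>{j<..m}. 1 / (of_nat i - of_nat j :: rat)) = (\<Sum>i\<in>{j<..n}. 1 / (of_nat i - of_nat j :: rat)) + (\<Sum>i\<in>{n<..m}. 1 / (of_nat i - of_nat j :: rat))"
      using assms by (rule sum_split2)
    ultimately show ?thesis using assms by (simp add: S2)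
  qed
  have "(\<Sum>i\<in>{0..m}-{j}. of_nat (ee n i) / (of_nat i - of_nat j) :: rat) = (\<Sum>i\<in>{0..<j} \<union> ({j<..n} \<union> {n<..m}). of_nat (ee n i) / (of_nat i - of_nat j))"
    using split3[OF assms] by simp
  also have "\<dots> = (\<Sum>i\<in>{0..<j}. of_nat (ee n i) / (of_nat i - of_nat j)) + ((\<Sum>i\<in>{j<..n}. of_nat (ee n i) / (of_nat i - of_nat j)) + (\<Sum>i\<in>{n<..m}. of_nat (ee n i) / (of_nat i - of_nat j)))"
    by (rule sum_un3) (use assms in auto)
  finally show ?thesis using A B C by simp
qed

lemma split3': "(n::nat) < j \<Longrightarrow> j \<le> m \<Longrightarrow> {0..m}-{j} = {0..n} \<union> ({n<..<j} \<union> {j<..m})" by auto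

lemma Dk_val_gt:
  assumes "n < j" "j \<le> m"
  shows "poly (Dk m n j) (- of_nat j) = (fact j / fact (j - n - 1)) ^ 2 * ((-1)^(j-n-1) * fact (j - n - 1) * fact (m - j))"
proof -
  have A: "(\<Prod>i\<in>{0..n}. (of_nat i - of_nat j :: rat) ^ ee n i) = (fact j / fact (j - n - 1)) ^ 2"
  proof -
    have "(\<Prod>i\<in>{0..n}. (of_nat i - of_nat j :: rat) ^ ee n i) = (\<Prod>i\<in>{0..n}. (of_nat j - of_nat i :: rat) ^ 2)"
      by (rule prod.cong) (use assms in \<open>auto simp: ee_def power2_commute\<close>)
    also have "\<dots> = (fact j / fact (j - n - 1)) ^ 2" using assms by (simp add: prod_power_distrib[symmetric] P4)
    finally show ?thesis .
  qed
  have B: "(\<Prod>i\<in>{n<..<j}. (of_nat i - of_nat j :: rat) ^ ee n i) = (-1)^(j-n-1) * fact (j - n - 1)"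
  proof -
    have "(\<Prod>i\<in>{n<..<j}. (of_nat i - of_nat j :: rat) ^ ee n i) = (\<Prod>i\<in>{n<..<j}. (of_nat i - of_nat j :: rat))"
      by (rule prod.cong) (auto simp: ee_def)
    then show ?thesis using assms P3 by simp
  qed
  have C: "(\<Prod>i\<in>{j<..m}. (of_nat i - of_nat j :: rat) ^ ee n i) = fact (m - j)"
  proof -
    have "(\<Prod>i\<in>{j<..m}. (of_nat i - of_nat j :: rat) ^ ee n i) = (\<Prod>i\<in>{j<..m}. (of_nat i - of_nat j :: rat))"
      by (rule prod.cong) (use assms in \<open>auto simp: ee_def\<close>)
    then show ?thesis using assms P2 by simp
  qed
  have "poly (Dk m n j) (- of_nat j) = (\<Prod>i\<in>{0..n} \<union> ({n<..<j} \<union> {j<..m}). (of_nat i - of_nat j) ^ ee n i)"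
    using Dk_val split3'[OF assms] by simp
  also have "\<dots> = (\<Prod>i\<in>{0..n}. (of_nat i - of_nat j) ^ ee n i) * ((\<Prod>i\<in>{n<..<j}. (of_nat i - of_nat j) ^ ee n i) * (\<Prod>i\<in>{j<..m}. (of_nat i - of_nat j) ^ ee n i))"
    by (rule prod_un3) (use assms in auto)
  finally show ?thesis using A B C by simp
qed




definition aa :: "nat \<Rightarrow> nat \<Rightarrow> nat \<Rightarrow> rat" where
  "aa m n k = of_nat ((m + k) choose k) * of_nat (m choose k) * of_nat ((n + k) choose k) * of_nat (n choose k)"
definition bb :: "nat \<Rightarrow> nat \<Rightarrow> nat \<Rightarrow> rat" where
  "bb m n k = of_nat ((m + k) choose k) * of_nat (m choose k) * of_nat ((n + k) choose k) / of_nat ((k - 1) choose n)"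
definition WW :: "nat \<Rightarrow> nat \<Rightarrow> nat \<Rightarrow> rat" where
  "WW m n j = fact (n + j) / fact j * (fact (m + j) / fact j)"

lemma V_le:
  assumes "j \<le> n" "n \<le> m"
  shows "aa m n j * poly (Dk m n j) (- of_nat j) = WW m n j"
proof -
  have "j \<le> m" using assms by simp
  have b1: "of_nat ((m + j) choose j) = (fact (m + j) / (fact j * fact m) :: rat)"
    by (subst binomial_fact) auto
  have b2: "of_nat (m choose j) = (fact m / (fact j * fact (m - j)) :: rat)"
    using \<open>j \<le> m\<close> by (subst binomial_fact) auto
  have b3: "of_nat ((n + j) choose j) = (fact (n + j) / (fact j * fact n) :: rat)"
    by (subst binomial_fact) auto
  have b4: "of_nat (n choose j) = (fact n / (fact j * fact (n - j)) :: rat)"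
    using assms by (subst binomial_fact) auto
  show ?thesis unfolding aa_def WW_def Dk_val_le[OF assms] b1 b2 b3 b4
    by (simp add: field_simps power2_eq_square)
qed

lemma V_gt:
  assumes "n < j" "j \<le> m"
  shows "(-1) ^ (j - n) * bb m n j * poly (Dk m n j) (- of_nat j) = - of_nat j * WW m n j"
proof -
  obtain d where d: "j = n + 1 + d" using assms by (metis add_Suc less_iff_Suc_add add.commute add_Suc_right plus_1_eq_Suc)
  have b1: "of_nat ((m + j) choose j) = (fact (m + j) / (fact j * fact m) :: rat)"
    by (subst binomial_fact) auto
  have b2: "of_nat (m choose j) = (fact m / (fact j * fact (m - j)) :: rat)"
    using assms by (subst binomial_fact) auto
  have b3: "of_nat ((n + j) choose j) = (fact (n + j) / (fact j * fact n) :: rat)"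
    by (subst binomial_fact) auto
  have b4: "of_nat ((j - 1) choose n) = (fact (n + d) / (fact n * fact d) :: rat)"
    unfolding d by (subst binomial_fact) auto
  have f: "fact j = (of_nat j * fact (n + d) :: rat)" unfolding d by simp
  have s: "(-1::rat) ^ (j - n) = - ((-1) ^ d)" unfolding d by simp
  have e: "j - n - 1 = d" unfolding d by simp
  have key: "bb m n j * ((fact j / fact d) ^ 2 * (fact d * fact (m - j))) = of_nat j * WW m n j"
    unfolding bb_def WW_def b1 b2 b3 b4 f using assms by (simp add: field_simps power2_eq_square)
  have "(-1) ^ (j - n) * bb m n j * poly (Dk m n j) (- of_nat j)
      = - ((-1) ^ d * (-1) ^ d) * (bb m n j * ((fact j / fact d) ^ 2 * (fact d * fact (m - j))))"
    unfolding Dk_val_gt[OF assms] s e by (simp only: mult_ac minus_mult_left)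
  also have "(-1::rat) ^ d * (-1) ^ d = 1" by (simp add: power_add[symmetric])
  finally show ?thesis using key by simp
qed

definition Mp :: "nat \<Rightarrow> nat \<Rightarrow> nat \<Rightarrow> rat poly" where
  "Mp m n s = (\<Prod>i\<in>{1..n}. [:of_nat i, -1:]) * (\<Prod>i\<in>{1..m}-{s}. [:of_nat i, -1:])"

lemma Mval:
  assumes "s \<in> {1..m}"
  shows "(of_nat j + of_nat s) * poly (Mp m n s) (- of_nat j) = WW m n j"
proof -
  have A: "(\<Prod>i\<in>{1..m}. (of_nat i + of_nat j :: rat)) = (of_nat s + of_nat j) * (\<Prod>i\<in>{1..m}-{s}. (of_nat i + of_nat j :: rat))"
    using assms by (subst prod.remove[of _ s]) auto
  have "poly (Mp m n s) (- of_nat j) = (\<Prod>i\<in>{1..n}. (of_nat i + of_nat j :: rat)) * (\<Prod>i\<in>{1..m}-{s}. (of_nat i + of_nat j :: rat))"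
    unfolding Mp_def by (simp add: poly_prod add.commute)
  then have "(of_nat j + of_nat s) * poly (Mp m n s) (- of_nat j) = (\<Prod>i\<in>{1..n}. (of_nat i + of_nat j :: rat)) * (\<Prod>i\<in>{1..m}. (of_nat i + of_nat j :: rat))"
    unfolding A by (simp only: mult_ac add.commute)
  then show ?thesis unfolding WW_def P5[where n=n and j=j] P5[where n=m and j=j] by (simp add: add.commute)
qed

lemma Mder:
  assumes "s \<in> {1..m}"
  shows "poly (pderiv (Mp m n s)) (- of_nat j) = poly (Mp m n s) (- of_nat j) *
     (- (harm 1 (n + j) - harm 1 j) - (harm 1 (m + j) - harm 1 j - 1 / (of_nat j + of_nat s)))"
proof -
  let ?x = "- of_nat j :: rat"
  have r: "\<And>i. poly [:of_nat i, -1:] ?x = of_nat i + of_nat j" by simp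
  have rd: "\<And>i. poly (pderiv [:of_nat i, -1:]) ?x = -1" by (simp add: pderiv_pCons)
  have d1: "poly (pderiv (\<Prod>i\<in>{1..n}. [:of_nat i, -1:])) ?x = poly (\<Prod>i\<in>{1..n}. [:of_nat i, -1:]) ?x *
       (\<Sum>i\<in>{1..n}. poly (pderiv [:of_nat i, -1:]) ?x / poly [:of_nat i, -1:] ?x)"
    by (rule pderiv_prod_at) (auto simp: add_pos_nonneg)
  have d2: "poly (pderiv (\<Prod>i\<in>{1..m}-{s}. [:of_nat i, -1:])) ?x = poly (\<Prod>i\<in>{1..m}-{s}. [:of_nat i, -1:]) ?x *
       (\<Sum>i\<in>{1..m}-{s}. poly (pderiv [:of_nat i, -1:]) ?x / poly [:of_nat i, -1:] ?x)"
    by (rule pderiv_prod_at) (auto simp: add_pos_nonneg)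
  have s1: "(\<Sum>i\<in>{1..n}. poly (pderiv [:of_nat i, -1:]) ?x / poly [:of_nat i, -1:] ?x) = - (harm 1 (n + j) - harm 1 j)"
    unfolding r rd using S3[where n=n and j=j] by (simp add: sum_negf)
  have "(\<Sum>i\<in>{1..m}. 1 / (of_nat i + of_nat j :: rat)) = 1 / (of_nat s + of_nat j) + (\<Sum>i\<in>{1..m}-{s}. 1 / (of_nat i + of_nat j :: rat))"
    using assms by (subst sum.remove[of _ s]) auto
  then have s2: "(\<Sum>i\<in>{1..m}-{s}. poly (pderiv [:of_nat i, -1:]) ?x / poly [:of_nat i, -1:] ?x) = - (harm 1 (m + j) - harm 1 j - 1 / (of_nat j + of_nat s))"
    unfolding r rd using S3[where n=m and j=j] by (simp add: sum_negf algebra_simps)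
  show ?thesis unfolding Mp_def pderiv_mult poly_add poly_mult d1 d2 s1 s2 by (simp add: algebra_simps)
qed




definition EE :: "nat \<Rightarrow> nat \<Rightarrow> nat \<Rightarrow> rat" where
  "EE m n k = harm 1 (m + k) + harm 1 (m - k) + harm 1 (n + k) + harm 1 (n - k) - 4 * harm 1 k"
definition al :: "nat \<Rightarrow> nat \<Rightarrow> nat \<Rightarrow> nat \<Rightarrow> rat" where
  "al m n s k = (if k \<le> n then - of_nat k * aa m n k * (1 / of_nat (k + s))
                 else (-1) ^ (k - n) * bb m n k * (1 / of_nat (k + s)))"
definition be :: "nat \<Rightarrow> nat \<Rightarrow> nat \<Rightarrow> nat \<Rightarrow> rat" where
  "be m n s k = (if k \<le> n then aa m n k * (1 / of_nat (k + s))
        + aa m n k * (of_nat k * (1 / of_nat (k + s)) * EE m n k - of_nat k * (1 / of_nat (k + s)) ^ 2) else 0)"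
definition TT :: "nat \<Rightarrow> nat \<Rightarrow> nat \<Rightarrow> nat \<Rightarrow> rat poly" where
  "TT m n s k = [:al m n s k:] + smult (be m n s k) (lin k)"
definition PL :: "nat \<Rightarrow> nat \<Rightarrow> nat \<Rightarrow> rat poly" where
  "PL m n s = (\<Sum>k\<in>{0..m}. TT m n s k * Dk m n k)"
definition Np :: "nat \<Rightarrow> nat \<Rightarrow> nat \<Rightarrow> rat poly" where
  "Np m n s = [:0, 1:] * Mp m n s"

lemma poly_TT: "poly (TT m n s j) (- of_nat j) = al m n s j"
  by (simp add: TT_def)
lemma pderiv_TT: "pderiv (TT m n s j) = [:be m n s j:]"
  by (simp add: TT_def pderiv_add pderiv_smult pderiv_pCons)

lemma be_help: "(a::rat) * r + a * (k * r * E - k * r^2) = a * r * (1 + k * E - k * r)"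
  by (simp add: algebra_simps power2_eq_square)

lemma local_dvd:
  assumes "s \<in> {1..m}" "n \<le> m" "j \<le> m"
  shows "lin j ^ ee n j dvd TT m n s j * Dk m n j - Np m n s"
proof -
  let ?x = "- of_nat j :: rat"
  let ?D = "poly (Dk m n j) ?x"
  let ?M = "poly (Mp m n s) ?x"
  have js: "of_nat j + of_nat s \<noteq> (0::rat)" using assms by simp
  have MW: "(of_nat j + of_nat s) * ?M = WW m n j" by (rule Mval[OF assms(1)])
  have pN: "poly (Np m n s) ?x = - of_nat j * ?M" by (simp add: Np_def)
  show ?thesis
  proof (cases "j \<le> n")
    case True
    then have e: "ee n j = 2" by (simp add: ee_def)
    have aD: "aa m n j * ?D = WW m n j" by (rule V_le[OF True assms(2)])
    have alD: "al m n s j * ?D = - of_nat j * ?M"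
    proof -
      have "al m n s j * ?D = - of_nat j * (1 / of_nat (j + s)) * (aa m n j * ?D)"
        using True by (simp add: al_def)
      also have "\<dots> = - of_nat j * ?M" unfolding aD MW[symmetric] using js by (simp add: field_simps)
      finally show ?thesis .
    qed
    have v: "poly (TT m n s j * Dk m n j - Np m n s) ?x = 0"
    proof -
      have "poly (TT m n s j * Dk m n j - Np m n s) ?x = al m n s j * ?D + of_nat j * ?M"
        by (simp add: poly_TT pN)
      also have "al m n s j * ?D = - of_nat j * ?M" by (rule alD)
      finally show ?thesis by simp
    qed
    have d: "poly (pderiv (TT m n s j * Dk m n j - Np m n s)) ?x = 0"
    proof -
      have "poly (pderiv (TT m n s j * Dk m n j - Np m n s)) ?x
          = al m n s j * poly (pderiv (Dk m n j)) ?x + ?D * be m n s j - (?M - of_nat j * poly (pderiv (Mp m n s)) ?x)"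
        by (simp add: pderiv_diff pderiv_mult poly_TT pderiv_TT Np_def pderiv_pCons)
      also have "\<dots> = al m n s j * ?D * (- 2 * harm 1 j + harm 1 (n - j) + harm 1 (m - j)) + ?D * be m n s j
            - (?M - of_nat j * (?M * (- (harm 1 (n + j) - harm 1 j) - (harm 1 (m + j) - harm 1 j - 1 / (of_nat j + of_nat s)))))"
        unfolding Dk_der Dk_der_le[OF True assms(2)] Mder[OF assms(1)] by simp
      also have "al m n s j * ?D = - of_nat j * ?M" by (rule alD)
      also have "?D * be m n s j = ?M * (1 + of_nat j * EE m n j - of_nat j * (1 / (of_nat j + of_nat s)))"
      proof -
        have beq: "be m n s j = aa m n j * (1 / of_nat (j + s)) * (1 + of_nat j * EE m n j - of_nat j * (1 / of_nat (j + s)))"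
          unfolding be_def if_P[OF True] be_help ..
        have wm: "WW m n j * (1 / of_nat (j + s)) = ?M" unfolding MW[symmetric] using js by simp
        have "?D * be m n s j = (WW m n j * (1 / of_nat (j + s))) * (1 + of_nat j * EE m n j - of_nat j * (1 / of_nat (j + s)))"
          unfolding beq aD[symmetric] by (simp only: mult_ac)
        then show ?thesis unfolding wm by simp
      qed
      finally show ?thesis by (simp add: EE_def algebra_simps)
    qed
    show ?thesis unfolding e lin_def[symmetric] using crit2[OF v d] by simp
  next
    case False
    then have e: "ee n j = 1" by (simp add: ee_def)
    have gt: "n < j" using False by simp
    have v: "poly (TT m n s j * Dk m n j - Np m n s) ?x = 0"
    proof -
      have "poly (TT m n s j * Dk m n j - Np m n s) ?x = al m n s j * ?D + of_nat j * ?M"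
        by (simp add: poly_TT pN)
      also have "al m n s j * ?D = (1 / of_nat (j + s)) * ((-1) ^ (j - n) * bb m n j * ?D)"
        using False by (simp add: al_def)
      also have "\<dots> = - of_nat j * ?M" unfolding V_gt[OF gt assms(3)] MW[symmetric] using js by (simp add: field_simps)
      finally show ?thesis by simp
    qed
    show ?thesis unfolding e using crit1[OF v] by simp
  qed
qed


lemma Q_dvd:
  assumes "s \<in> {1..m}" "n \<le> m"
  shows "Dful m n dvd PL m n s - Np m n s"
proof (rule Dful_dvd)
  fix j assume j: "j \<le> m"
  have PLs: "PL m n s = TT m n s j * Dk m n j + (\<Sum>k\<in>{0..m}-{j}. TT m n s k * Dk m n k)"
    unfolding PL_def using j by (subst sum.remove[of _ j]) auto
  have r: "lin j ^ ee n j dvd (\<Sum>k\<in>{0..m}-{j}. TT m n s k * Dk m n k)"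
  proof (rule dvd_sum)
    fix k assume "k \<in> {0..m}-{j}"
    then have "lin j ^ ee n j dvd Dk m n k" using j lin_dvd_Dk by auto
    then show "lin j ^ ee n j dvd TT m n s k * Dk m n k" by (rule dvd_mult)
  qed
  have eq: "PL m n s - Np m n s = (TT m n s j * Dk m n j - Np m n s) + (\<Sum>k\<in>{0..m}-{j}. TT m n s k * Dk m n k)"
    unfolding PLs by simp
  show "lin j ^ ee n j dvd PL m n s - Np m n s"
    unfolding eq by (rule dvd_add[OF local_dvd[OF assms j] r])
qed

lemma sum_ee: "n \<le> m \<Longrightarrow> (\<Sum>i\<in>{0..m}. ee n i) = m + n + 2"
proof (induction m rule: dec_induct)
  case base
  have "(\<Sum>i\<in>{0..n}. ee n i) = (\<Sum>i\<in>{0..n}. 2)" by (rule sum.cong) (auto simp: ee_def)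
  then show ?case by simp
next
  case (step m)
  have "(\<Sum>i\<in>{0..Suc m}. ee n i) = (\<Sum>i\<in>{0..m}. ee n i) + ee n (Suc m)" by (rule sum.atLeast0_atMost_Suc)
  also have "ee n (Suc m) = 1" using step by (simp add: ee_def)
  finally show ?case using step by simp
qed

lemma degree_TT: "degree (TT m n s k) \<le> ee n k - 1"
proof (cases "k \<le> n")
  case True
  have "degree (TT m n s k) \<le> 1" unfolding TT_def
    by (rule degree_add_le) (auto intro: order.trans[OF degree_smult_le])
  then show ?thesis using True by (simp add: ee_def)
next
  case False
  then show ?thesis by (simp add: TT_def be_def ee_def)
qed

lemma degree_PL:
  assumes "n \<le> m"
  shows "degree (PL m n s) \<le> m + n + 1"
  unfolding PL_def
proof (rule degree_sum_le)
  fix k assume k: "k \<in> {0..m}"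
  have "degree (TT m n s k * Dk m n k) \<le> degree (TT m n s k) + degree (Dk m n k)"
    by (rule degree_mult_le)
  also have "degree (Dk m n k) = (\<Sum>i\<in>{0..m}. ee n i) - ee n k"
    unfolding degree_Dk using k by (subst sum_diff1_nat) auto
  also have "(\<Sum>i\<in>{0..m}. ee n i) = m + n + 2" using sum_ee[OF assms] .
  finally have "degree (TT m n s k * Dk m n k) \<le> ee n k - 1 + (m + n + 2 - ee n k)"
    using degree_TT[of m n s k] by linarith
  moreover have "ee n k \<le> 2" by (simp add: ee_def)
  moreover have "1 \<le> ee n k" using ee_pos[of n k] by linarith
  ultimately show "degree (TT m n s k * Dk m n k) \<le> m + n + 1" by linarith
qed simp

lemma degree_Np:
  assumes "s \<in> {1..m}"
  shows "degree (Np m n s) \<le> m + n"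
proof -
  have d1: "degree (\<Prod>i\<in>{1..n}. [:of_nat i, -1::rat:]) \<le> n"
    using degree_prod_sum_le[of "{1..n}" "\<lambda>i. [:of_nat i, -1::rat:]"] by simp
  have "degree (\<Prod>i\<in>{1..m}-{s}. [:of_nat i, -1::rat:]) \<le> card ({1..m}-{s})"
    using degree_prod_sum_le[of "{1..m}-{s}" "\<lambda>i. [:of_nat i, -1::rat:]"] by simp
  also have "card ({1..m}-{s}) = m - 1" using assms by simp
  finally have d2: "degree (\<Prod>i\<in>{1..m}-{s}. [:of_nat i, -1::rat:]) \<le> m - 1" .
  have "degree (Np m n s) \<le> degree [:0, 1::rat:] + degree (Mp m n s)"
    unfolding Np_def by (rule degree_mult_le)
  also have "degree (Mp m n s) \<le> n + (m - 1)"
    unfolding Mp_def by (rule order.trans[OF degree_mult_le add_mono[OF d1 d2]])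
  finally show ?thesis using assms by simp
qed

lemma PL_eq_Np:
  assumes "s \<in> {1..m}" "n \<le> m"
  shows "PL m n s = Np m n s"
proof (rule ccontr)
  assume "PL m n s \<noteq> Np m n s"
  then have nz: "PL m n s - Np m n s \<noteq> 0" by simp
  have "degree (Dful m n) \<le> degree (PL m n s - Np m n s)"
    by (rule dvd_imp_degree_le[OF Q_dvd[OF assms] nz])
  also have "\<dots> \<le> max (degree (PL m n s)) (degree (Np m n s))" by (rule degree_diff_le_max)
  also have "\<dots> \<le> m + n + 1" using degree_PL[OF assms(2), of s] degree_Np[OF assms(1), of n] by simp
  finally show False unfolding degree_Dful sum_ee[OF assms(2)] by simp
qed




lemma RC_minus: "RC (- a) = - RC a" by (simp add: RC_tf tf_minus[symmetric])
lemma RC_1: "RC 1 = 1" by (simp add: RC_tf tf_1[symmetric] one_pCons)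
lemma RC_power: "RC (a ^ k) = RC a ^ k"
proof (induction k)
  case 0 then show ?case by (simp add: RC_1)
next
  case (Suc k)
  have "RC (a ^ Suc k) = RC a * RC (a ^ k)" by (simp only: power_Suc RC_mult)
  then show ?case using Suc by simp
qed
lemma RC_of_nat: "(of_nat x :: ratfun) = RC (of_nat x)"
  by (simp add: RC_tf tf_of_nat[symmetric] of_nat_poly)
lemma RC_eq_0: "RC a = 0 \<longleftrightarrow> a = 0" by (simp add: RC_tf tf_eq_0_iff)
lemma RC_divide: "RC (a / b) = RC a / RC b"
proof (cases "b = 0")
  case True then show ?thesis by (simp add: RC_0)
next
  case False
  have "RC (a / b) * RC b = RC a" using False by (simp add: RC_mult[symmetric])
  then show ?thesis using False by (simp add: RC_eq_0 field_simps)
qed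
lemma RC_neg1_pow: "((-1) ^ k :: ratfun) = RC ((-1) ^ k)" by (simp add: RC_power RC_minus RC_1)

lemma tf_lin: "tf (lin k) = RX + of_nat k"
  by (simp add: RX_tf lin_def tf_of_nat[symmetric] tf_add[symmetric] of_nat_poly)
lemma RXk_nz: "RX + of_nat k \<noteq> 0" by (metis tf_lin tf_eq_0_iff lin_nz)
lemma tf_TT: "tf (TT m n s k) = RC (al m n s k) + RC (be m n s k) * (RX + of_nat k)"
  by (simp add: TT_def tf_add RC_tf tf_mult[symmetric] tf_lin[symmetric])

lemma term_id0: "Y \<noteq> (0::ratfun) \<Longrightarrow>
   1 / Y * c1 * c2 * c3 * c4 * (R * ((Y - K) / Y + K * E) - K * R ^ 2) = (- (K * (c1 * c2 * c3 * c4) * R)) / Y ^ 2 + ((c1 * c2 * c3 * c4) * R + (c1 * c2 * c3 * c4) * (K * R * E - K * R ^ 2)) / Y"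
  by (simp add: field_simps power2_eq_square)

lemma term_id: "X + K \<noteq> (0::ratfun) \<Longrightarrow> R2 = R ^ 2 \<Longrightarrow>
   1 / (X + K) * c1 * c2 * c3 * c4 * (R * (X / (X + K) + K * E) - K * R2) = (- (K * (c1 * c2 * c3 * c4) * R)) / (X + K) ^ 2 + ((c1 * c2 * c3 * c4) * R + (c1 * c2 * c3 * c4) * (K * R * E - K * R ^ 2)) / (X + K)"
  using term_id0[of "X + K" c1 c2 c3 c4 R K E] by simp

lemma term_le:
  "1 / (RX + of_nat k) * of_nat ((m + k) choose k) * of_nat (m choose k) * of_nat ((n + k) choose k) * of_nat (n choose k)
     * (RC (1 / of_nat (k + s) ^ 1) * (RX / (RX + of_nat k) + of_nat k * RC (harm 1 (m + k) + harm 1 (m - k) + harm 1 (n + k)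
                               + harm 1 (n - k) - 4 * harm 1 k)) - of_nat k * RC (1 / of_nat (k + s) ^ 2))
   = RC (- of_nat k * aa m n k * (1 / of_nat (k + s))) / (RX + of_nat k) ^ 2
     + RC (aa m n k * (1 / of_nat (k + s)) + aa m n k * (of_nat k * (1 / of_nat (k + s)) * EE m n k - of_nat k * (1 / of_nat (k + s)) ^ 2)) / (RX + of_nat k)"
proof -
  have p: "(1::rat) / of_nat (k + s) ^ 2 = (1 / of_nat (k + s)) ^ 2" by (simp add: power_one_over)
  show ?thesis
    unfolding p power_one_right EE_def[symmetric]
    apply (subst term_id[OF RXk_nz RC_power])
    apply (simp only: aa_def RC_mult RC_minus RC_power RC_add RC_diff RC_of_nat[symmetric])
    done
qed


lemma term_gt:
  "(-1) ^ (k - n) / (RX + of_nat k) * of_nat ((m + k) choose k) * of_nat (m choose k) * of_nat ((n + k) choose k)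
        / of_nat ((k - 1) choose n) * RC (1 / of_nat (k + s) ^ 1)
   = RC ((-1) ^ (k - n) * bb m n k * (1 / of_nat (k + s))) / (RX + of_nat k)"
  unfolding bb_def power_one_right
  by (simp only: RC_mult RC_divide RC_power RC_minus RC_1 RC_of_nat[symmetric]) (simp add: mult_ac)

definition FF :: "nat \<Rightarrow> nat \<Rightarrow> (nat \<Rightarrow> nat \<Rightarrow> rat) \<Rightarrow> ratfun" where
  "FF m n u = (\<Sum>k=0..n. 1 / (RX + of_nat k)
        * of_nat ((m + k) choose k) * of_nat (m choose k)
        * of_nat ((n + k) choose k) * of_nat (n choose k)
        * ( RC (u 1 k) * ( RX / (RX + of_nat k)
              + of_nat k * RC (harm 1 (m + k) + harm 1 (m - k) + harm 1 (n + k)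
                               + harm 1 (n - k) - 4 * harm 1 k))
            - of_nat k * RC (u 2 k)))
     + (\<Sum>k=n+1..m. (-1) ^ (k - n) / (RX + of_nat k)
        * of_nat ((m + k) choose k) * of_nat (m choose k) * of_nat ((n + k) choose k)
        / of_nat ((k - 1) choose n) * RC (u 1 k))"

definition RHSP :: "nat \<Rightarrow> nat \<Rightarrow> ratfun" where
  "RHSP m n = RX * pochhammer (1 - RX) n * pochhammer (1 - RX) m
         / (pochhammer RX (n + 1) * pochhammer RX (m + 1))"

lemma prod_ee: "n \<le> m \<Longrightarrow> (\<Prod>i\<in>{0..m}. f i ^ ee n i) = (\<Prod>i\<in>{0..n}. f i) * (\<Prod>i\<in>{0..m}. (f i :: ratfun))"
proof (induction m rule: dec_induct)
  case base
  have "(\<Prod>i\<in>{0..n}. f i ^ ee n i) = (\<Prod>i\<in>{0..n}. f i * f i)" by (rule prod.cong) (auto simp: ee_def power2_eq_square)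
  then show ?case by (simp add: prod.distrib)
next
  case (step m)
  have "(\<Prod>i\<in>{0..Suc m}. f i ^ ee n i) = (\<Prod>i\<in>{0..m}. f i ^ ee n i) * f (Suc m) ^ ee n (Suc m)" by (rule prod.atLeast0_atMost_Suc)
  also have "ee n (Suc m) = 1" using step by (simp add: ee_def)
  finally show ?case using step by (simp add: prod.atLeast0_atMost_Suc mult_ac)
qed

lemma tf_Dful: "n \<le> m \<Longrightarrow> tf (Dful m n) = pochhammer RX (n + 1) * pochhammer RX (m + 1)"
  unfolding Dful_def tf_prod tf_power tf_lin by (simp add: prod_ee pochhammer_Suc_prod)

lemma poch_1mRX: "pochhammer (1 - RX) n = (\<Prod>i\<in>{1..n}. (of_nat i - RX))"
proof (induction n)
  case 0 then show ?case by simp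
next
  case (Suc n)
  then show ?case by (simp add: pochhammer_Suc atLeastAtMostSuc_conv algebra_simps)
qed

lemma tf_lin': "tf [:of_nat i, -1:] = of_nat i - RX"
proof -
  have "[:of_nat i, -1:] = (of_nat i :: rat poly) - [:0, 1:]" by (simp add: of_nat_poly)
  then show ?thesis by (simp add: tf_diff tf_of_nat RX_tf)
qed

lemma sRX_nz: "of_nat s - RX \<noteq> 0" by (metis tf_lin' tf_eq_0_iff pCons_eq_0_iff neg_equal_0_iff_equal one_neq_zero)

lemma tf_Np: "s \<in> {1..m} \<Longrightarrow> tf (Np m n s) * (of_nat s - RX) = RX * pochhammer (1 - RX) n * pochhammer (1 - RX) m"
proof -
  assume s: "s \<in> {1..m}"
  have "(\<Prod>i\<in>{1..m}. (of_nat i - RX)) = (of_nat s - RX) * (\<Prod>i\<in>{1..m}-{s}. (of_nat i - RX))"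
    using s by (subst prod.remove[of _ s]) auto
  then show ?thesis unfolding Np_def Mp_def tf_mult tf_prod tf_lin' poch_1mRX RX_tf[symmetric] by (simp add: mult_ac)
qed

lemma cancel_aux: "c \<noteq> 0 \<Longrightarrow> a * c / d * (1 / c) = a / (d::'a::field)"
  by (simp add: divide_inverse mult_ac)

lemma RHS_s: "s \<in> {1..m} \<Longrightarrow> n \<le> m \<Longrightarrow> RHSP m n * (1 / (of_nat s - RX)) = tf (Np m n s) / tf (Dful m n)"
  unfolding RHSP_def tf_Dful[symmetric] tf_Np[symmetric] using sRX_nz[of s] by (rule cancel_aux)




lemma split_aux: "Y \<noteq> (0::ratfun) \<Longrightarrow> (a + b * Y) / Y ^ 2 = a / Y ^ 2 + b / Y"
  by (simp add: field_simps power2_eq_square)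

lemma Dk_nz: "Dk m n k \<noteq> 0" unfolding Dk_def by (simp add: prod_zero_iff)

lemma FF_s:
  assumes "s \<in> {1..m}" "n \<le> m"
  shows "FF m n (\<lambda>r k. 1 / of_nat (k + s) ^ r) = RHSP m n * (1 / (of_nat s - RX))"
proof -
  define f where "f k = tf (TT m n s k) / tf (lin k ^ ee n k)" for k
  have e1: "(\<Sum>k=0..n. 1 / (RX + of_nat k)
        * of_nat ((m + k) choose k) * of_nat (m choose k)
        * of_nat ((n + k) choose k) * of_nat (n choose k)
        * ( RC (1 / of_nat (k + s) ^ 1) * ( RX / (RX + of_nat k)
              + of_nat k * RC (harm 1 (m + k) + harm 1 (m - k) + harm 1 (n + k)
                               + harm 1 (n - k) - 4 * harm 1 k))
            - of_nat k * RC (1 / of_nat (k + s) ^ 2))) = (\<Sum>k=0..n. f k)"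
  proof (rule sum.cong)
    fix k assume k: "k \<in> {0..n}"
    have "f k = tf (TT m n s k) / (RX + of_nat k) ^ 2"
      unfolding f_def tf_power tf_lin using k by (simp add: ee_def)
    also have "\<dots> = RC (al m n s k) / (RX + of_nat k) ^ 2 + RC (be m n s k) / (RX + of_nat k)"
      unfolding tf_TT by (rule split_aux[OF RXk_nz])
    finally show "1 / (RX + of_nat k)
        * of_nat ((m + k) choose k) * of_nat (m choose k)
        * of_nat ((n + k) choose k) * of_nat (n choose k)
        * ( RC (1 / of_nat (k + s) ^ 1) * ( RX / (RX + of_nat k)
              + of_nat k * RC (harm 1 (m + k) + harm 1 (m - k) + harm 1 (n + k)
                               + harm 1 (n - k) - 4 * harm 1 k))
            - of_nat k * RC (1 / of_nat (k + s) ^ 2)) = f k"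
      unfolding term_le using k by (simp add: al_def be_def)
  qed simp
  have e2: "(\<Sum>k=n+1..m. (-1) ^ (k - n) / (RX + of_nat k)
        * of_nat ((m + k) choose k) * of_nat (m choose k) * of_nat ((n + k) choose k)
        / of_nat ((k - 1) choose n) * RC (1 / of_nat (k + s) ^ 1)) = (\<Sum>k=n+1..m. f k)"
  proof (rule sum.cong)
    fix k assume k: "k \<in> {n+1..m}"
    have "f k = RC (al m n s k) / (RX + of_nat k)"
      unfolding f_def tf_power tf_lin tf_TT using k by (simp add: ee_def be_def RC_0)
    then show "(-1) ^ (k - n) / (RX + of_nat k)
        * of_nat ((m + k) choose k) * of_nat (m choose k) * of_nat ((n + k) choose k)
        / of_nat ((k - 1) choose n) * RC (1 / of_nat (k + s) ^ 1) = f k"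
      unfolding term_gt using k by (simp add: al_def)
  qed simp
  have un: "{0..m} = {0..n} \<union> {n+1..m}" using assms by auto
  have e3: "(\<Sum>k=0..n. f k) + (\<Sum>k=n+1..m. f k) = (\<Sum>k=0..m. f k)"
    unfolding un by (rule sum.union_disjoint[symmetric]) auto
  have e4: "(\<Sum>k=0..m. f k) = tf (PL m n s) / tf (Dful m n)"
  proof -
    have "(\<Sum>k=0..m. f k) = (\<Sum>k=0..m. tf (TT m n s k * Dk m n k) / tf (Dful m n))"
    proof (rule sum.cong)
      fix k assume k: "k \<in> {0..m}"
      have nz: "tf (Dk m n k) \<noteq> 0" by (simp add: tf_eq_0_iff Dk_nz)
      have "tf (Dful m n) = tf (lin k ^ ee n k) * tf (Dk m n k)" using k Dful_split[of k m n] by (simp add: tf_mult)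
      then show "f k = tf (TT m n s k * Dk m n k) / tf (Dful m n)"
        unfolding f_def tf_mult using nz by simp
    qed simp
    also have "\<dots> = tf (PL m n s) / tf (Dful m n)"
      unfolding PL_def tf_sum by (simp add: sum_divide_distrib)
    finally show ?thesis .
  qed
  show ?thesis unfolding FF_def power_one_right
    using e1 e2 e3 e4 RHS_s[OF assms] PL_eq_Np[OF assms] by simp
qed




definition PP :: "nat \<Rightarrow> nat \<Rightarrow> nat \<Rightarrow> ratfun" where
  "PP m n k = (1 / (RX + of_nat k)
        * of_nat ((m + k) choose k) * of_nat (m choose k)
        * of_nat ((n + k) choose k) * of_nat (n choose k))"
definition QQ :: "nat \<Rightarrow> nat \<Rightarrow> nat \<Rightarrow> ratfun" where
  "QQ m n k = RX / (RX + of_nat k)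
              + of_nat k * RC (harm 1 (m + k) + harm 1 (m - k) + harm 1 (n + k)
                               + harm 1 (n - k) - 4 * harm 1 k)"
definition RR :: "nat \<Rightarrow> nat \<Rightarrow> nat \<Rightarrow> ratfun" where
  "RR m n k = (-1) ^ (k - n) / (RX + of_nat k)
        * of_nat ((m + k) choose k) * of_nat (m choose k) * of_nat ((n + k) choose k)
        / of_nat ((k - 1) choose n)"

lemma FF_form: "FF m n u = (\<Sum>k=0..n. PP m n k * QQ m n k * RC (u 1 k) - PP m n k * of_nat k * RC (u 2 k))
     + (\<Sum>k=n+1..m. RR m n k * RC (u 1 k))"
  unfolding FF_def PP_def[symmetric] QQ_def[symmetric] RR_def[symmetric]
  by (intro arg_cong2[where f="(+)"] sum.cong refl) (simp add: algebra_simps)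

lemma FF_add: "FF m n (\<lambda>r k. u r k + v r k) = FF m n u + FF m n v"
  unfolding FF_form RC_add by (simp add: algebra_simps sum.distrib sum_subtractf)

lemma FF_scale: "FF m n (\<lambda>r k. c * u r k) = RC c * FF m n u"
  unfolding FF_form RC_mult by (simp add: algebra_simps sum_distrib_left sum_subtractf)

lemma FF_zero: "FF m n (\<lambda>r k. 0) = 0"
  unfolding FF_form RC_0 by simp

lemma FF_sum: "finite S \<Longrightarrow> FF m n (\<lambda>r k. \<Sum>s\<in>S. g s r k) = (\<Sum>s\<in>S. FF m n (g s))"
proof (induction S rule: finite_induct)
  case empty then show ?case using FF_zero by simp
next
  case (insert a S)
  then show ?case using FF_add[of m n "g a" "\<lambda>r k. \<Sum>s\<in>S. g s r k"] by simp
qed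

theorem theorem2p2:
  fixes l m n :: nat and c1 c2 :: rat
  assumes "0 < n" and "m < l" and "n \<le> m" and "l \<le> 2 * n"
  defines "U \<equiv> (\<lambda>r k. c1 * (harm r (k + n) - harm r (k + l - n - 1))
                       + c2 * (harm r (k + m) - harm r (k + l - m - 1)))"
  shows
    "(\<Sum>k=0..n. 1 / (RX + of_nat k)
        * of_nat ((m + k) choose k) * of_nat (m choose k)
        * of_nat ((n + k) choose k) * of_nat (n choose k)
        * ( RC (U 1 k) * ( RX / (RX + of_nat k)
              + of_nat k * RC (harm 1 (m + k) + harm 1 (m - k) + harm 1 (n + k)
                               + harm 1 (n - k) - 4 * harm 1 k))
            - of_nat k * RC (U 2 k)))
     + (\<Sum>k=n+1..m. (-1) ^ (k - n) / (RX + of_nat k)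
        * of_nat ((m + k) choose k) * of_nat (m choose k) * of_nat ((n + k) choose k)
        / of_nat ((k - 1) choose n) * RC (U 1 k))
     = RX * pochhammer (1 - RX) n * pochhammer (1 - RX) m
         / (pochhammer RX (n + 1) * pochhammer RX (m + 1))
       * ( RC c1 * (\<Sum>s=l-n..n. 1 / (of_nat s - RX))
         + RC c2 * (\<Sum>s=l-m..m. 1 / (of_nat s - RX)))"
proof -
  define g where "g s r k = (1::rat) / of_nat (k + s) ^ r" for s r k :: nat
  have U: "U = (\<lambda>r k. c1 * (\<Sum>s\<in>{l-n..n}. g s r k) + c2 * (\<Sum>s\<in>{l-m..m}. g s r k))"
  proof (intro ext)
    fix r k
    have h1: "harm r (k + n) - harm r (k + l - n - 1) = (\<Sum>s\<in>{l-n..n}. g s r k)"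
    proof -
      have "k + l - n - 1 = k + (l - n - 1)" using assms by simp
      moreover have "{l-n-1<..n} = {l-n..n}" using assms by auto
      ultimately show ?thesis using harm_diff[of "l - n - 1" n r k] assms unfolding g_def by simp
    qed
    have h2: "harm r (k + m) - harm r (k + l - m - 1) = (\<Sum>s\<in>{l-m..m}. g s r k)"
    proof -
      have "k + l - m - 1 = k + (l - m - 1)" using assms by simp
      moreover have "{l-m-1<..m} = {l-m..m}" using assms by auto
      ultimately show ?thesis using harm_diff[of "l - m - 1" m r k] assms unfolding g_def by simp
    qed
    show "U r k = c1 * (\<Sum>s\<in>{l-n..n}. g s r k) + c2 * (\<Sum>s\<in>{l-m..m}. g s r k)"
      unfolding U_def h1 h2 ..
  qed
  have lhs: "FF m n U = RC c1 * (\<Sum>s\<in>{l-n..n}. FF m n (g s)) + RC c2 * (\<Sum>s\<in>{l-m..m}. FF m n (g s))"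
    unfolding U FF_add FF_scale FF_sum[OF finite_atLeastAtMost] ..
  have s1: "(\<Sum>s\<in>{l-n..n}. FF m n (g s)) = (\<Sum>s\<in>{l-n..n}. RHSP m n * (1 / (of_nat s - RX)))"
  proof (rule sum.cong)
    fix s assume "s \<in> {l-n..n}"
    then have "s \<in> {1..m}" using assms by auto
    then show "FF m n (g s) = RHSP m n * (1 / (of_nat s - RX))"
      using FF_s[OF _ assms(3)] unfolding g_def by blast
  qed simp
  have s2: "(\<Sum>s\<in>{l-m..m}. FF m n (g s)) = (\<Sum>s\<in>{l-m..m}. RHSP m n * (1 / (of_nat s - RX)))"
  proof (rule sum.cong)
    fix s assume "s \<in> {l-m..m}"
    then have "s \<in> {1..m}" using assms by auto
    then show "FF m n (g s) = RHSP m n * (1 / (of_nat s - RX))"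
      using FF_s[OF _ assms(3)] unfolding g_def by blast
  qed simp
  have "FF m n U = RHSP m n * (RC c1 * (\<Sum>s=l-n..n. 1 / (of_nat s - RX)) + RC c2 * (\<Sum>s=l-m..m. 1 / (of_nat s - RX)))"
    unfolding lhs s1 s2 sum_distrib_left[symmetric] by (simp add: algebra_simps)
  then show ?thesis unfolding FF_def RHSP_def .
qed


end
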